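(* Let $F:[n]^\ell\to\mathbb{R}$ be permutation-invariant. Then: (1) for every $a\in[n]$, every integer $0\le i\le\ell-1$ and every $X\in[n]^i$, $f_{i+1,F}(a,X)=f_{i,F|_{\{a\}}}(X)-f_{i,F}(X)$; (2) for every integer $0\le i\le\ell$ and every $X\in[n]^i$, $$f_{i,F}(X)=\sum_{B\subseteq\{1,\dots,i\}}(-1)^{i-|B|}\,\delta_{X|_B}(F),$$ where $X|_B$ is the ordered tuple of entries of $X$ with indices in $B$.
   Context: $[n]=\{0,\dots,n-1\}=\mathbb{Z}/n\mathbb{Z}$, $\chi_t(x)=e^{2\pi itx/n}$, $\chi_T(x)=\prod_j\chi_{T_j}(x_j)$ for $T\in[n]^m$, and $\hat F(T)=\mathbb{E}_{Y\in[n]^m}[F(Y)\overline{\chi_T(Y)}]$ for $F:[n]^m\to\mathbb{R}$, so $F=\sum_T\hat F(T)\chi_T$. $F$ is permutation-invariant if $F(x_1,\dots,x_m)=F(x_{\pi(1)},\dots,x_{\pi(m)})$ for every permutation $\pi$. For $F:[n]^m\to\mathbb{R}$ and $0\le i\le m$, $f_{i,F}:[n]^i\to\mathbb{C}$ is $f_{i,F}(x_1,\dots,x_i)=\sum_{(T_1,\dots,T_i)\in([n]\setminus\{0\})^i}\hat F(T_1,\dots,T_i,0,\dots,0)\chi_{T_1,\dots,T_i}(x_1,\dots,x_i)$. For $A=(a_1,\dots,a_r)\in[n]^r$, $r\le m-1$, the restriction $F|_A:[n]^{m-r}\to\mathbb{R}$ is $F|_A(x)=F(a_1,\dots,a_r,x)$,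 and $\delta_A(F)=\mathbb{E}_{x\in[n]^{m-r}}[F|_A(x)]$; for $A$ empty, $F|_A=F$ and $\delta_A(F)=\mathbb{E}[F]$. *)

theory Defs
  imports Complex_Main "HOL-Combinatorics.Permutations"
begin

text \<open>Tuples in [n]^m are lists of length m with entries in {0..<n}.\<close>
definition tuples :: "nat \<Rightarrow> nat \<Rightarrow> nat list set" where
  "tuples n m = {xs. length xs = m \<and> set xs \<subseteq> {..<n}}"

definition nz_tuples :: "nat \<Rightarrow> nat \<Rightarrow> nat list set" where
  "nz_tuples n m = {xs. length xs = m \<and> set xs \<subseteq> {1..<n}}"

definition chi :: "nat \<Rightarrow> nat list \<Rightarrow> nat list \<Rightarrow> complex" where
  "chi n T x = (\<Prod>j<length T. exp (2 * of_real pi * \<i> * of_nat (T ! j) * of_nat (x ! j) / of_nat n))"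

definition fourier :: "nat \<Rightarrow> nat \<Rightarrow> (nat list \<Rightarrow> real) \<Rightarrow> nat list \<Rightarrow> complex" where
  "fourier n m F T = (\<Sum>Y\<in>tuples n m. of_real (F Y) * cnj (chi n T Y)) / of_nat (card (tuples n m))"

definition fcoef :: "nat \<Rightarrow> nat \<Rightarrow> nat \<Rightarrow> (nat list \<Rightarrow> real) \<Rightarrow> nat list \<Rightarrow> complex" where
  "fcoef n m i F X = (\<Sum>T\<in>nz_tuples n i. fourier n m F (T @ replicate (m - i) 0) * chi n T X)"

definition restr :: "nat list \<Rightarrow> (nat list \<Rightarrow> real) \<Rightarrow> nat list \<Rightarrow> real" where
  "restr A F = (\<lambda>x. F (A @ x))"

definition delta :: "nat \<Rightarrow> nat \<Rightarrow> nat list \<Rightarrow> (nat list \<Rightarrow> real) \<Rightarrow> real" where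
  "delta n m A F = (\<Sum>x\<in>tuples n (m - length A). restr A F x) / real (card (tuples n (m - length A)))"

definition perm_invariant :: "nat \<Rightarrow> nat \<Rightarrow> (nat list \<Rightarrow> real) \<Rightarrow> bool" where
  "perm_invariant n m F \<longleftrightarrow>
     (\<forall>xs\<in>tuples n m. \<forall>\<pi>. \<pi> permutes {..<m} \<longrightarrow> F (map (\<lambda>j. xs ! \<pi> j) [0..<m]) = F xs)"

end

theory Submission
  imports Defs "HOL-Analysis.Analysis"
begin

definition ee :: "nat \<Rightarrow> nat \<Rightarrow> nat \<Rightarrow> complex" where
  "ee n t x = exp (2 * of_real pi * \<i> * of_nat t * of_nat x / of_nat n)"

lemma chi_Nil[simp]: "chi n [] X = 1" by (simp add: chi_def)

lemma chi_Cons: "chi n (t # T) (x # X) = ee n t x * chi n T X"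
  unfolding chi_def ee_def length_Cons prod.lessThan_Suc_shift by simp

lemma lists_Suc_eq: "{xs. length xs = Suc m \<and> set xs \<subseteq> S} = (\<lambda>(x,xs). x # xs) ` (S \<times> {xs. length xs = m \<and> set xs \<subseteq> S})"
  by (auto simp: length_Suc_conv image_iff)

lemma sum_lists_Suc:
  "(\<Sum>xs\<in>{xs. length xs = Suc m \<and> set xs \<subseteq> S}. g xs) = (\<Sum>x\<in>S. \<Sum>xs\<in>{xs. length xs = m \<and> set xs \<subseteq> S}. g (x # xs))"
proof -
  have "inj_on (\<lambda>(x,xs). x # xs) (S \<times> {xs. length xs = m \<and> set xs \<subseteq> S})"
    by (auto simp: inj_on_def)
  then show ?thesis
    by (simp add: lists_Suc_eq sum.reindex sum.cartesian_product case_prod_unfold)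
qed

lemma sum_tuples_Suc: "(\<Sum>Y\<in>tuples n (Suc m). g Y) = (\<Sum>y<n. \<Sum>Y\<in>tuples n m. g (y # Y))"
  unfolding tuples_def by (rule sum_lists_Suc)

lemma sum_nz_tuples_Suc: "(\<Sum>Y\<in>nz_tuples n (Suc m). g Y) = (\<Sum>y\<in>{1..<n}. \<Sum>Y\<in>nz_tuples n m. g (y # Y))"
  unfolding nz_tuples_def by (rule sum_lists_Suc)

lemma tuples_Suc: "tuples n (Suc m) = (\<lambda>(x,xs). x # xs) ` ({..<n} \<times> tuples n m)"
  unfolding tuples_def by (rule lists_Suc_eq)

lemma card_tuples: "card (tuples n m) = n ^ m"
proof (induction m)
  case 0
  have "tuples n 0 = {[]}" by (auto simp: tuples_def)
  then show ?case by simp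
next
  case (Suc m)
  have "inj_on (\<lambda>(x,xs). x # xs) ({..<n} \<times> tuples n m)"
    by (auto simp: inj_on_def)
  then show ?case using Suc by (simp add: tuples_Suc card_image card_cartesian_product)
qed

lemma tuples_0: "tuples n 0 = {[]}" by (auto simp: tuples_def)
lemma nz_tuples_0: "nz_tuples n 0 = {[]}" by (auto simp: nz_tuples_def)

lemma ee_orth:
  assumes "a < n" "y < n"
  shows "(\<Sum>t<n. cnj (ee n t y) * ee n t a) = (if a = y then of_nat n else 0)"
proof -
  define c where "c = 2 * of_real pi * \<i> * (of_nat a - of_nat y) / (of_nat n :: complex)"
  have n0: "n > 0" using assms by auto
  have 1: "cnj (ee n t y) * ee n t a = exp c ^ t" for t
  proof -
    have "cnj (ee n t y) * ee n t a = exp (cnj (2 * of_real pi * \<i> * of_nat t * of_nat y / of_nat n) + 2 * of_real pi * \<i> * of_nat t * of_nat a / of_nat n)"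
      unfolding ee_def exp_cnj mult_exp_exp by simp
    also have "\<dots> = exp (of_nat t * c)"
      by (rule arg_cong[where f=exp]) (simp add: c_def diff_divide_distrib algebra_simps)
    finally show ?thesis by (simp add: exp_of_nat_mult)
  qed
  have 2: "exp c ^ n = 1"
  proof -
    have "exp c ^ n = exp (of_nat n * c)" by (simp add: exp_of_nat_mult)
    also have "of_nat n * c = (2 * of_int (int a - int y) * pi) * \<i>"
      using n0 by (simp add: c_def field_simps)
    also have "exp \<dots> = 1" by (rule exp_integer_2pi) (metis Ints_of_int of_real_of_int_eq)
    finally show ?thesis .
  qed
  have 3: "exp c = 1 \<longleftrightarrow> a = y"
  proof
    assume "a = y" then show "exp c = 1" by (simp add: c_def)
  next
    assume "exp c = 1"
    then obtain k :: int where k: "Im c = of_int (2 * k) * pi" by (auto simp: exp_eq_1)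
    have "Im c = 2 * pi * (real a - real y) / real n" by (simp add: c_def)
    with k have "2 * pi * (real a - real y) / real n = of_int (2 * k) * pi" by simp
    then have "pi * (2 * (real a - real y)) = pi * (2 * (real n * of_int k))" using n0 by (simp add: field_simps)
    then have "real a - real y = real n * of_int k" by simp
    then have e: "int a - int y = int n * k" by (metis of_int_eq_iff of_int_of_nat_eq of_int_diff of_int_mult)
    show "a = y"
    proof (rule ccontr)
      assume "a \<noteq> y"
      then have "k \<noteq> 0" using e by auto
      then have "\<bar>int n * k\<bar> \<ge> int n" by (simp add: abs_mult mult_le_cancel_left1; linarith)
      moreover have "\<bar>int a - int y\<bar> < int n" using assms by auto
      ultimately show False using e by simp
    qed
  qed
  show ?thesis using 2 3 by (simp add: 1 sum_gp_strict)
qed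

lemma fourier_Cons:
  "fourier n (Suc m) F (t # T') = (\<Sum>y<n. \<Sum>Y\<in>tuples n m. of_real (F (y # Y)) * cnj (chi n T' Y) * cnj (ee n t y)) / of_nat (n ^ Suc m)"
  unfolding fourier_def sum_tuples_Suc chi_Cons card_tuples by (simp add: mult_ac)

lemma fourier_sum_first:
  assumes "a < n"
  shows "(\<Sum>t<n. fourier n (Suc m) F (t # T') * ee n t a) = fourier n m (restr [a] F) T'"
proof -
  define G where "G y Y = of_real (F (y # Y)) * cnj (chi n T' Y)" for y Y
  define N where "N = (of_nat (n ^ Suc m) :: complex)"
  have "(\<Sum>t<n. fourier n (Suc m) F (t # T') * ee n t a)
      = (\<Sum>t<n. \<Sum>y<n. \<Sum>Y\<in>tuples n m. G y Y * (cnj (ee n t y) * ee n t a)) / N"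
    unfolding fourier_Cons G_def N_def
    by (simp add: sum_divide_distrib sum_distrib_left sum_distrib_right mult_ac)
  also have "\<dots> = (\<Sum>y<n. \<Sum>t<n. \<Sum>Y\<in>tuples n m. G y Y * (cnj (ee n t y) * ee n t a)) / N"
    by (subst sum.swap) (rule refl)
  also have "\<dots> = (\<Sum>y<n. \<Sum>Y\<in>tuples n m. \<Sum>t<n. G y Y * (cnj (ee n t y) * ee n t a)) / N"
    by (subst (2) sum.swap) (rule refl)
  also have "\<dots> = (\<Sum>y<n. \<Sum>Y\<in>tuples n m. G y Y * (if a = y then of_nat n else 0)) / N"
    by (simp add: sum_distrib_left[symmetric] ee_orth assms)
  also have "\<dots> = (\<Sum>Y\<in>tuples n m. G a Y * of_nat n) / N"
    using assms by (simp add: if_distrib cong: if_cong, subst sum.swap, simp add: sum.delta sum.delta')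
  also have "\<dots> = fourier n m (restr [a] F) T'"
    unfolding fourier_def G_def N_def card_tuples restr_def using assms
    by (simp add: sum_distrib_right[symmetric] field_simps sum_distrib_left)
  finally show ?thesis .
qed

lemma permutes_by_inj:
  assumes "finite S" "inj_on p S" "p ` S \<subseteq> S" "\<And>x. x \<notin> S \<Longrightarrow> p x = x"
  shows "p permutes S"
proof (rule bij_imp_permutes)
  show "bij_betw p S S" using endo_inj_surj[OF assms(1) assms(3) assms(2)] assms(2) by (simp add: bij_betw_def)
qed (use assms in auto)

lemma chi_permute:
  assumes p: "p permutes {..<length T}" and len: "length Y = length T"
  shows "chi n (permute_list p T) Y = chi n T (permute_list (inv p) Y)"
proof -
  have pi: "inv p permutes {..<length Y}" using permutes_inv[OF p] len by simp
  have "chi n (permute_list p T) Y = (\<Prod>j<length T. exp (2 * of_real pi * \<i> * of_nat (T ! p j) * of_nat (Y ! j) / of_nat n))"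
    unfolding chi_def by (intro prod.cong) (auto simp: permute_list_nth[OF p])
  also have "\<dots> = (\<Prod>j<length T. exp (2 * of_real pi * \<i> * of_nat (T ! j) * of_nat (Y ! inv p j) / of_nat n))"
    by (rule prod.permutes_inv[OF p, where g = "\<lambda>a b. exp (2 * of_real pi * \<i> * of_nat (T ! a) * of_nat (Y ! b) / of_nat n)"])
  also have "\<dots> = chi n T (permute_list (inv p) Y)"
    unfolding chi_def using len by (intro prod.cong) (auto simp: permute_list_nth[OF pi])
  finally show ?thesis .
qed

lemma perm_inv_permute:
  assumes "perm_invariant n l F" "p permutes {..<l}" "xs \<in> tuples n l"
  shows "F (permute_list p xs) = F xs"
  using assms unfolding perm_invariant_def permute_list_def tuples_def by auto

lemma fourier_permute:
  assumes inv: "perm_invariant n l F" and p: "p permutes {..<l}" and len: "length T = l"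
  shows "fourier n l F (permute_list p T) = fourier n l F T"
proof -
  have pi: "inv p permutes {..<l}" using permutes_inv[OF p] .
  have pl: "permute_list p (permute_list (inv p) Y) = Y" if "length Y = l" for Y
    using permute_list_compose[of p Y "inv p"] p that permutes_inv_o(2)[OF p] by simp
  have pl2: "permute_list (inv p) (permute_list p Y) = Y" if "length Y = l" for Y
    using permute_list_compose[of "inv p" Y p] pi that permutes_inv_o(1)[OF p] by simp
  have "(\<Sum>Y\<in>tuples n l. of_real (F Y) * cnj (chi n (permute_list p T) Y))
      = (\<Sum>Y\<in>tuples n l. of_real (F Y) * cnj (chi n T Y))"
  proof (rule sum.reindex_bij_witness[where j = "permute_list (inv p)" and i = "permute_list p"])
    fix Y assume Y: "Y \<in> tuples n l"
    then have lY: "length Y = l" by (simp add: tuples_def)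
    show "permute_list (inv p) (permute_list p Y) = Y" using pl2 lY .
    show "permute_list p Y \<in> tuples n l" using Y p by (simp add: tuples_def)
    show "permute_list p (permute_list (inv p) Y) = Y" using pl lY .
    show "permute_list (inv p) Y \<in> tuples n l" using Y pi by (simp add: tuples_def)
    show "of_real (F (permute_list (inv p) Y)) * cnj (chi n T (permute_list (inv p) Y)) = of_real (F Y) * cnj (chi n (permute_list p T) Y)"
      using perm_inv_permute[OF inv pi Y] chi_permute[of p T Y n] p len lY by simp
  qed
  then show ?thesis unfolding fourier_def by simp
qed

definition rot :: "nat \<Rightarrow> nat \<Rightarrow> nat" where
  "rot i j = (if j = 0 then i else if j \<le> i then j - 1 else j)"

lemma rot_permutes: assumes "i < l" shows "rot i permutes {..<l}"
proof (rule permutes_by_inj)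
  show "inj_on (rot i) {..<l}" by (auto simp: inj_on_def rot_def split: if_splits)
  show "rot i ` {..<l} \<subseteq> {..<l}" using assms by (auto simp: rot_def)
  show "\<And>x. x \<notin> {..<l} \<Longrightarrow> rot i x = x" using assms by (auto simp: rot_def)
qed simp

lemma permute_rot:
  assumes "length T = i" "i < l" "length (T @ 0 # Z) = l"
  shows "permute_list (rot i) (T @ 0 # Z) = 0 # T @ Z"
proof (rule nth_equalityI)
  show "length (permute_list (rot i) (T @ 0 # Z)) = length (0 # T @ Z)" by simp
  fix j assume j: "j < length (permute_list (rot i) (T @ 0 # Z))"
  have p: "rot i permutes {..<length (T @ 0 # Z)}" using rot_permutes assms by simp
  have j': "j < length (T @ 0 # Z)" using j by simp
    show "permute_list (rot i) (T @ 0 # Z) ! j = (0 # T @ Z) ! j"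
    using j assms unfolding permute_list_nth[OF p j']
    by (cases j) (auto simp: rot_def nth_append nth_Cons' split: if_splits)
qed

lemma fourier_zero_move:
  assumes inv: "perm_invariant n l F" and "length T = i" "i < l" "length (T @ 0 # Z) = l"
  shows "fourier n l F (0 # T @ Z) = fourier n l F (T @ 0 # Z)"
  using fourier_permute[OF inv rot_permutes[OF assms(3)] assms(4)] permute_rot[OF assms(2-4)] by simp

lemma ee_0[simp]: "ee n 0 a = 1" by (simp add: ee_def)

lemma inner_sum:
  assumes inv: "perm_invariant n l F" and a: "a < n" and i: "i < l" and lT: "length T = i"
  shows "(\<Sum>t\<in>{1..<n}. fourier n l F (t # T @ replicate (l - Suc i) 0) * ee n t a)
       = fourier n (l - 1) (restr [a] F) (T @ replicate (l - 1 - i) 0) - fourier n l F (T @ replicate (l - i) 0)"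
proof -
  define T' where "T' = T @ replicate (l - Suc i) 0"
  have n0: "{..<n} = insert 0 {1..<n}" using a by auto
  have l: "Suc (l - 1) = l" using i by simp
  have "(\<Sum>t<n. fourier n l F (t # T') * ee n t a) = fourier n (l - 1) (restr [a] F) T'"
    using fourier_sum_first[OF a, of "l - 1" F T'] l by simp
  then have 1: "(\<Sum>t\<in>{1..<n}. fourier n l F (t # T') * ee n t a) = fourier n (l - 1) (restr [a] F) T' - fourier n l F (0 # T')"
    unfolding n0 by (simp add: algebra_simps)
  have "fourier n l F (0 # T') = fourier n l F (T @ 0 # replicate (l - Suc i) 0)"
    unfolding T'_def by (rule fourier_zero_move[OF inv lT i]) (use lT i in simp)
  also have "T @ 0 # replicate (l - Suc i) 0 = T @ replicate (l - i) 0"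
    using i by (simp add: Suc_diff_Suc[symmetric])
  finally show ?thesis using 1 unfolding T'_def by simp
qed

lemma part1:
  assumes inv: "perm_invariant n l F" and a: "a < n" and i: "i < l" and X: "X \<in> tuples n i"
  shows "fcoef n l (Suc i) F (a # X) = fcoef n (l - 1) i (restr [a] F) X - fcoef n l i F X"
proof -
  have "fcoef n l (Suc i) F (a # X)
     = (\<Sum>t\<in>{1..<n}. \<Sum>T\<in>nz_tuples n i. fourier n l F (t # T @ replicate (l - Suc i) 0) * ee n t a * chi n T X)"
    unfolding fcoef_def sum_nz_tuples_Suc by (simp add: chi_Cons mult_ac)
  also have "\<dots> = (\<Sum>T\<in>nz_tuples n i. (\<Sum>t\<in>{1..<n}. fourier n l F (t # T @ replicate (l - Suc i) 0) * ee n t a) * chi n T X)"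
    by (subst sum.swap) (simp add: sum_distrib_right)
  also have "\<dots> = (\<Sum>T\<in>nz_tuples n i. (fourier n (l - 1) (restr [a] F) (T @ replicate (l - 1 - i) 0) - fourier n l F (T @ replicate (l - i) 0)) * chi n T X)"
    by (intro sum.cong refl arg_cong2[where f="(*)"] inner_sum[OF inv a i]) (simp add: nz_tuples_def)
  also have "\<dots> = fcoef n (l - 1) i (restr [a] F) X - fcoef n l i F X"
    unfolding fcoef_def by (simp add: left_diff_distrib sum_subtractf)
  finally show ?thesis .
qed

lemma restr_inv:
  assumes inv: "perm_invariant n l F" and l: "0 < l" and a: "a < n"
  shows "perm_invariant n (l - 1) (restr [a] F)"
  unfolding perm_invariant_def
proof (intro ballI allI impI)
  fix xs p assume xs: "xs \<in> tuples n (l - 1)" and p: "p permutes {..<l - 1}"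
  define q where "q j = (if j = 0 then 0 else Suc (p (j - 1)))" for j
  have q: "q permutes {..<l}"
  proof (rule permutes_by_inj)
    show "inj_on q {..<l}"
    proof (rule inj_onI)
      fix x y assume "q x = q y"
      then show "x = y"
      proof (cases "x = 0"; cases "y = 0")
        assume "q x = q y" "x \<noteq> 0" "y \<noteq> 0"
        then have "p (x - 1) = p (y - 1)" by (simp add: q_def)
        then have "x - 1 = y - 1" using permutes_inj[OF p] by (simp add: inj_eq)
        then show "x = y" using \<open>x \<noteq> 0\<close> \<open>y \<noteq> 0\<close> by simp
      qed (auto simp: q_def)
    qed
    show "q ` {..<l} \<subseteq> {..<l}"
    proof
      fix y assume "y \<in> q ` {..<l}"
      then obtain x where x: "x < l" "y = q x" by auto
      show "y \<in> {..<l}"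
      proof (cases "x = 0")
        case True then show ?thesis using x l by (simp add: q_def)
      next
        case False
        then have "x - 1 \<in> {..<l - 1}" using x by simp
        then have "p (x - 1) \<in> {..<l - 1}" using permutes_in_image[OF p] by blast
        then show ?thesis using x False by (simp add: q_def)
      qed
    qed
    show "q x = x" if "x \<notin> {..<l}" for x
    proof -
      have "x \<noteq> 0" "x - 1 \<notin> {..<l - 1}" using that l by auto
      then show ?thesis using permutes_not_in[OF p, of "x - 1"] by (simp add: q_def)
    qed
  qed simp
  have axs: "a # xs \<in> tuples n l" using xs a l by (auto simp: tuples_def)
  have lx: "length xs = l - 1" using xs by (simp add: tuples_def)
  have me: "map (\<lambda>j. (a # xs) ! q j) [0..<l] = a # map (\<lambda>j. xs ! p j) [0..<l - 1]"
  proof (rule nth_equalityI)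
    show "length (map (\<lambda>j. (a # xs) ! q j) [0..<l]) = length (a # map (\<lambda>j. xs ! p j) [0..<l - 1])" using l by simp
    fix j assume "j < length (map (\<lambda>j. (a # xs) ! q j) [0..<l])"
    then have j: "j < l" by simp
    show "map (\<lambda>j. (a # xs) ! q j) [0..<l] ! j = (a # map (\<lambda>j. xs ! p j) [0..<l - 1]) ! j"
      using j by (cases j) (auto simp: q_def)
  qed
  have "F (map (\<lambda>j. (a # xs) ! q j) [0..<l]) = F (a # xs)"
    using inv q axs unfolding perm_invariant_def by blast
  then show "restr [a] F (map (\<lambda>j. xs ! p j) [0..<l - 1]) = restr [a] F xs"
    unfolding restr_def me by simp
qed

lemma delta_restr: "delta n (l - 1) A (restr [a] F) = delta n l (a # A) F"
proof -
  have "l - 1 - length A = l - length (a # A)" by simp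
  then show ?thesis unfolding delta_def restr_def by simp
qed

lemma Pow_lessThan_Suc:
  "Pow {..<Suc i} = (\<lambda>B. Suc ` B) ` Pow {..<i} \<union> (\<lambda>B. insert 0 (Suc ` B)) ` Pow {..<i}"
proof
  show "Pow {..<Suc i} \<subseteq> (\<lambda>B. Suc ` B) ` Pow {..<i} \<union> (\<lambda>B. insert 0 (Suc ` B)) ` Pow {..<i}"
  proof
    fix B assume B: "B \<in> Pow {..<Suc i}"
    define C where "C = {j. Suc j \<in> B}"
    have C: "C \<in> Pow {..<i}"
    proof -
      have "j < i" if "j \<in> C" for j
      proof -
        have "Suc j \<in> B" using that by (simp add: C_def)
        then have "Suc j < Suc i" using B by blast
        then show ?thesis by simp
      qed
      then show ?thesis by blast
    qed
    have e: "B - {0} = Suc ` C"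
    proof
      show "B - {0} \<subseteq> Suc ` C"
      proof
        fix x assume x: "x \<in> B - {0}"
        then have "x = Suc (x - 1)" by simp
        moreover have "x - 1 \<in> C" using x by (simp add: C_def)
        ultimately show "x \<in> Suc ` C" by (rule image_eqI)
      qed
      show "Suc ` C \<subseteq> B - {0}" by (auto simp: C_def)
    qed
    show "B \<in> (\<lambda>B. Suc ` B) ` Pow {..<i} \<union> (\<lambda>B. insert 0 (Suc ` B)) ` Pow {..<i}"
    proof (cases "0 \<in> B")
      case True
      then have "B = insert 0 (Suc ` C)" using e by blast
      then have "B \<in> (\<lambda>B. insert 0 (Suc ` B)) ` Pow {..<i}" by (rule image_eqI[OF _ C])
      then show ?thesis by (rule UnI2)
    next
      case False
      then have "B = Suc ` C" using e by blast
      then have "B \<in> (\<lambda>B. Suc ` B) ` Pow {..<i}" by (rule image_eqI[OF _ C])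
      then show ?thesis by (rule UnI1)
    qed
  qed
  show "(\<lambda>B. Suc ` B) ` Pow {..<i} \<union> (\<lambda>B. insert 0 (Suc ` B)) ` Pow {..<i} \<subseteq> Pow {..<Suc i}"
    by auto
qed
lemma sum_Pow_Suc:
  "(\<Sum>B\<in>Pow {..<Suc i}. g B) = (\<Sum>B\<in>Pow {..<i}. g (Suc ` B)) + (\<Sum>B\<in>Pow {..<i}. g (insert 0 (Suc ` B)))"
proof -
  have i1: "inj_on (\<lambda>B. Suc ` B) (Pow {..<i})" by (rule inj_onI) (simp add: inj_image_eq_iff)
  have i2: "inj_on (\<lambda>B. insert 0 (Suc ` B)) (Pow {..<i})"
  proof (rule inj_onI)
    fix B C assume "insert 0 (Suc ` B) = insert (0::nat) (Suc ` C)"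
    then have "Suc ` B = Suc ` C"
      by (metis (no_types, lifting) Diff_insert_absorb image_iff nat.distinct(1))
    then show "B = C" by (simp add: inj_image_eq_iff)
  qed
  have d: "(\<lambda>B. Suc ` B) ` Pow {..<i} \<inter> (\<lambda>B. insert 0 (Suc ` B)) ` Pow {..<i} = {}" by auto
  show ?thesis
    unfolding Pow_lessThan_Suc
    by (subst sum.union_disjoint) (use d i1 i2 in \<open>auto simp: sum.reindex\<close>)
qed



lemma nths_Suc: "nths (a # X) (Suc ` B) = nths X B"
  by (simp add: nths_Cons inj_image_mem_iff)

lemma nths_Suc0: "nths (a # X) (insert 0 (Suc ` B)) = a # nths X B"
  by (simp add: nths_Cons inj_image_mem_iff)

lemma part2:
  "\<forall>l F X. perm_invariant n l F \<longrightarrow> 0 < n \<longrightarrow> i \<le> l \<longrightarrow> X \<in> tuples n i \<longrightarrow>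
     fcoef n l i F X = (\<Sum>B\<in>Pow {..<i}. (-1) ^ (i - card B) * complex_of_real (delta n l (nths X B) F))"
proof (induction i)
  case 0
  show ?case
  proof (intro allI impI)
    fix l F X assume "X \<in> tuples n 0"
    then have X: "X = []" by (simp add: tuples_def)
    have c: "cnj (chi n (replicate l 0) Y) = 1" for Y by (simp add: chi_def)
    show "fcoef n l 0 F X = (\<Sum>B\<in>Pow {..<0}. (-1) ^ (0 - card B) * complex_of_real (delta n l (nths X B) F))"
      unfolding fcoef_def fourier_def delta_def nz_tuples_0 X restr_def
      by (simp add: c)
  qed
next
  case (Suc i)
  show ?case
  proof (intro allI impI)
    fix l F X assume inv: "perm_invariant n l F" and n: "0 < n" and il: "Suc i \<le> l" and X: "X \<in> tuples n (Suc i)"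
    obtain a X' where aX: "X = a # X'" and a: "a < n" and X': "X' \<in> tuples n i"
      using X by (cases X) (auto simp: tuples_def)
    have inv': "perm_invariant n (l - 1) (restr [a] F)" using restr_inv[OF inv _ a] il by simp
    have card: "card B \<le> i" if "B \<in> Pow {..<i}" for B
      using card_mono[of "{..<i}" B] that by auto
    have "fcoef n l (Suc i) F X = fcoef n (l - 1) i (restr [a] F) X' - fcoef n l i F X'"
      unfolding aX by (rule part1[OF inv a _ X']) (use il in simp)
    also have "\<dots> = (\<Sum>B\<in>Pow {..<i}. (-1) ^ (i - card B) * complex_of_real (delta n l (a # nths X' B) F))
                   - (\<Sum>B\<in>Pow {..<i}. (-1) ^ (i - card B) * complex_of_real (delta n l (nths X' B) F))"
      using Suc.IH inv inv' n il X' by (simp add: delta_restr[simplified])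
    also have "\<dots> = (\<Sum>B\<in>Pow {..<i}. (-1) ^ (Suc i - card (Suc ` B)) * complex_of_real (delta n l (nths X (Suc ` B)) F))
                   + (\<Sum>B\<in>Pow {..<i}. (-1) ^ (Suc i - card (insert 0 (Suc ` B))) * complex_of_real (delta n l (nths X (insert 0 (Suc ` B))) F))"
    proof -
      have 1: "(\<Sum>B\<in>Pow {..<i}. (-1) ^ (Suc i - card (Suc ` B)) * complex_of_real (delta n l (nths X (Suc ` B)) F))
           = - (\<Sum>B\<in>Pow {..<i}. (-1) ^ (i - card B) * complex_of_real (delta n l (nths X' B) F))"
        unfolding sum_negf[symmetric]
      proof (rule sum.cong[OF refl])
        fix B assume B: "B \<in> Pow {..<i}"
        have "card (Suc ` B) = card B" by (simp add: card_image)
        then have "Suc i - card (Suc ` B) = Suc (i - card B)" using card[OF B] by simp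
        then show "(-1) ^ (Suc i - card (Suc ` B)) * complex_of_real (delta n l (nths X (Suc ` B)) F)
            = - ((-1) ^ (i - card B) * complex_of_real (delta n l (nths X' B) F))"
          by (simp add: aX nths_Suc)
      qed
      have 2: "(\<Sum>B\<in>Pow {..<i}. (-1) ^ (Suc i - card (insert 0 (Suc ` B))) * complex_of_real (delta n l (nths X (insert 0 (Suc ` B))) F))
           = (\<Sum>B\<in>Pow {..<i}. (-1) ^ (i - card B) * complex_of_real (delta n l (a # nths X' B) F))"
      proof (rule sum.cong[OF refl])
        fix B assume B: "B \<in> Pow {..<i}"
        have fB: "finite B" using B finite_subset by auto
        have "card (insert 0 (Suc ` B)) = Suc (card B)" using fB by (simp add: card_image)
        then have "Suc i - card (insert 0 (Suc ` B)) = i - card B" by simp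
        then show "(-1) ^ (Suc i - card (insert 0 (Suc ` B))) * complex_of_real (delta n l (nths X (insert 0 (Suc ` B))) F)
            = (-1) ^ (i - card B) * complex_of_real (delta n l (a # nths X' B) F)"
          by (simp add: aX nths_Suc0)
      qed
      show ?thesis unfolding 1 2 by simp
    qed
    also have "\<dots> = (\<Sum>B\<in>Pow {..<Suc i}. (-1) ^ (Suc i - card B) * complex_of_real (delta n l (nths X B) F))"
      by (rule sum_Pow_Suc[symmetric])
    finally show "fcoef n l (Suc i) F X = (\<Sum>B\<in>Pow {..<Suc i}. (-1) ^ (Suc i - card B) * complex_of_real (delta n l (nths X B) F))" .
  qed
qed

theorem lemmaC10:
  fixes n l :: nat and F :: "nat list \<Rightarrow> real"
  assumes "n > 0"
    and "perm_invariant n l F"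
  shows "(\<forall>a<n. \<forall>i<l. \<forall>X\<in>tuples n i.
            fcoef n l (Suc i) F (a # X) = fcoef n (l - 1) i (restr [a] F) X - fcoef n l i F X)
       \<and> (\<forall>i\<le>l. \<forall>X\<in>tuples n i.
            fcoef n l i F X = (\<Sum>B\<in>Pow {..<i}. (-1) ^ (i - card B) * complex_of_real (delta n l (nths X B) F)))"
proof (intro conjI)
  show "\<forall>a<n. \<forall>i<l. \<forall>X\<in>tuples n i.
            fcoef n l (Suc i) F (a # X) = fcoef n (l - 1) i (restr [a] F) X - fcoef n l i F X"
    using part1[OF assms(2)] by blast
  show "\<forall>i\<le>l. \<forall>X\<in>tuples n i.
            fcoef n l i F X = (\<Sum>B\<in>Pow {..<i}. (-1) ^ (i - card B) * complex_of_real (delta n l (nths X B) F))"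
  proof (intro allI impI ballI)
    fix i X assume "i \<le> l" "X \<in> tuples n i"
    then show "fcoef n l i F X = (\<Sum>B\<in>Pow {..<i}. (-1) ^ (i - card B) * complex_of_real (delta n l (nths X B) F))"
      using part2[of n i] assms by simp
  qed
qed

end
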